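(* For all positive integers $n$ and non-negative integers $k$, $$\det_{0\le i,j\le n-1}\big(MP_{i+j}(k)\big)=\det_{0\le i,j\le n-1}\Big(\sum_{\ell\ge0}\sum_{l=-k}^{k+1}\binom{i+j}{\ell,\ \ell+l}\Big)= \begin{cases}(-1)^{n_1\binom{k+1}2}, & n=(k+1)n_1,\\ (-1)^{n_1\binom{k+1}2}, & n=(k+1)n_1+1,\\ 0, & n\not\equiv0,1\pmod{k+1},\end{cases}$$ with $n_1$ a non-negative integer (for $k=0$, the first case is meant). In particular, for $k=0$, $\det_{0\le i,j\le n-1}(MP_{i+j})=1$ where $MP_m=MP_m(0)$ are the Motzkin prefix numbers.
   Context: $MP_m(k)$ denotes the number of lattice paths with $m$ steps from $\{(1,1),(1,0),(1,-1)\}$ starting at $(0,k)$ (with any end point) that never run below the $x$-axis. The trinomial coefficient is $\binom{m}{k_1,k_2}=\frac{m!}{k_1!\,k_2!\,(m-k_1-k_2)!}$, taken to be $0$ if any of $k_1,k_2,m-k_1-k_2$ is negative. *)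

theory Defs
  imports Main "Jordan_Normal_Form.Determinant"
begin

text \<open>A path with m steps is encoded by its list of vertical increments, each in
{-1,0,1}.\<close>
definition MP :: "nat \<Rightarrow> nat \<Rightarrow> nat" where
  "MP m k = card {s :: int list. set s \<subseteq> {-1, 0, 1} \<and> length s = m \<and>
                     (\<forall>j\<le>m. int k + sum_list (take j s) \<ge> 0)}"

definition trinom :: "nat \<Rightarrow> int \<Rightarrow> int \<Rightarrow> int" where
  "trinom m k1 k2 =
     (if k1 < 0 \<or> k2 < 0 \<or> int m - k1 - k2 < 0 then 0
      else int (fact m div (fact (nat k1) * fact (nat k2) * fact (m - nat k1 - nat k2))))"

end

theory Submission
  imports Defs "Jordan_Normal_Form.Char_Poly" "HOL-Computational_Algebra.Formal_Laurent_Series"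
begin


definition Y :: "int \<Rightarrow> int fls" where "Y i = fls_X_intpow i"

lemma Y_nth[simp]: "fls_nth (Y i) n = (if n = i then 1 else 0)"
  by (simp add: Y_def)

lemma Y_mult[simp]: "Y i * Y j = Y (i + j)"
  unfolding Y_def by (rule fls_X_intpow_times_fls_X_intpow)

lemma Y_times_nth[simp]: "fls_nth ((Y i * f)) n =fls_nth ( f) (n - i)"
  by (simp add: Y_def fls_X_intpow_times_conv_shift)

lemma times_Y_nth[simp]: "fls_nth ((f * Y i)) n =fls_nth ( f) (n - i)"
  by (simp add: Y_def fls_X_intpow_times_conv_shift)

lemma Y0[simp]: "Y 0 = 1" by (simp add: Y_def)

definition XX :: "int fls" where "XX = Y 1 + 1 + Y (-1)"

lemma XX_times_nth: "fls_nth (XX * f) n = fls_nth f (n - 1) + fls_nth f n + fls_nth f (n + 1)"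
  by (simp add: XX_def distrib_right)


lemma fact_div_trinom:
  assumes "a + b \<le> m"
  shows "fact m div (fact a * fact b * fact (m - a - b)) = (m choose (a + b)) * ((a + b) choose a)"
proof -
  have 1: "fact (a+b) * fact (m - (a+b)) * (m choose (a+b)) = (fact m :: nat)"
    using binomial_fact_lemma[OF assms] .
  have 2: "fact a * fact (a + b - a) * ((a+b) choose a) = (fact (a+b) :: nat)"
    using binomial_fact_lemma[of a "a+b"] by simp
  have "(fact m :: nat) = ((m choose (a + b)) * ((a + b) choose a)) * (fact a * fact b * fact (m - a - b))"
    using 1 2 by (metis (no_types, lifting) add_diff_cancel_left' diff_diff_left mult.assoc mult.commute)
  moreover have "(fact a * fact b * fact (m - a - b) :: nat) > 0" by simp
  ultimately show ?thesis by simp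
qed

lemma trinom_alt:
  "trinom m a b = (if a < 0 \<or> b < 0 then 0 else int (m choose nat (a + b)) * int (nat (a + b) choose nat a))"
proof (cases "a < 0 \<or> b < 0")
  case True thus ?thesis by (auto simp: trinom_def)
next
  case False
  then obtain a' b' where ab: "a = int a'" "b = int b'" by (metis nonneg_int_cases not_less)
  show ?thesis
  proof (cases "a' + b' \<le> m")
    case True
    have "m - nat a - nat b = m - a' - b'" using ab by simp
    then show ?thesis using True ab fact_div_trinom[OF True] by (simp add: trinom_def nat_add_distrib)
  next
    case False
    then show ?thesis using ab by (simp add: trinom_def nat_add_distrib)
  qed
qed

lemma trinom_nat: "trinom m (int a) (int b) = int (m choose (a + b)) * int ((a + b) choose a)"
proof -
  have "nat (int a + int b) = a + b" by simp
  thus ?thesis by (simp add: trinom_alt del: nat_int_add)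
qed

lemma trinom_neg1: "a < 0 \<Longrightarrow> trinom m a b = 0" and trinom_neg2: "b < 0 \<Longrightarrow> trinom m a b = 0"
  by (auto simp: trinom_def)

lemma trinom_big: "int m < a \<Longrightarrow> trinom m a b = 0"
  by (auto simp: trinom_def)

lemma trinom_rec: "trinom (Suc m) a b = trinom m (a - 1) b + trinom m a (b - 1) + trinom m a b"
proof (cases "a < 0 \<or> b < 0")
  case True thus ?thesis by (auto simp: trinom_neg1 trinom_neg2)
next
  case False
  then obtain a' b' where ab: "a = int a'" "b = int b'" by (metis nonneg_int_cases not_less)
  show ?thesis
  proof (cases a')
    case 0
    show ?thesis
    proof (cases b')
      case 0 thus ?thesis using ab \<open>a' = 0\<close> by (simp add: trinom_neg1 trinom_neg2 trinom_alt)
    next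
      case (Suc b'')
      have e0: "trinom m a (b - 1) = trinom m (int 0) (int b'')" "trinom (Suc m) a b = trinom (Suc m) (int 0) (int (Suc b''))"
        "trinom m a b = trinom m (int 0) (int (Suc b''))" using ab Suc \<open>a' = 0\<close> by simp_all
      have "trinom m (a - 1) b = 0" using ab \<open>a' = 0\<close> by (simp add: trinom_neg1)
      thus ?thesis unfolding e0 by (simp only: trinom_nat) simp
    qed
  next
    case (Suc a'')
    show ?thesis
    proof (cases b')
      case 0
      have e0: "trinom m (a - 1) b = trinom m (int a'') (int 0)" "trinom (Suc m) a b = trinom (Suc m) (int (Suc a'')) (int 0)"
        "trinom m a b = trinom m (int (Suc a'')) (int 0)" using ab Suc 0 by simp_all
      have "trinom m a (b - 1) = 0" using ab 0 by (simp add: trinom_neg2)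
      thus ?thesis unfolding e0 by (simp only: trinom_nat) simp
    next
      fix b'' assume Suc2: "b' = Suc b''"
      have e1: "trinom m (a - 1) b = trinom m (int a'') (int (Suc b''))" using ab Suc Suc2 by simp
      have e2: "trinom m a (b - 1) = trinom m (int (Suc a'')) (int b'')" using ab Suc Suc2 by simp
      have s: "Suc a'' + Suc b'' = Suc (Suc (a'' + b''))" by simp
      have s2: "a'' + Suc b'' = Suc (a'' + b'')" "Suc a'' + b'' = Suc (a'' + b'')" by simp_all
      show ?thesis unfolding e1 e2 using ab Suc Suc2
        by (simp only: trinom_nat s s2 binomial_Suc_Suc of_nat_add distrib_left distrib_right)
    qed
  qed
qed

lemma XX_pow_nth: "fls_nth (XX ^ m) l = (\<Sum>a\<in>{0..m}. trinom m (int a) (int a + l))"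
proof (induction m arbitrary: l)
  case 0
  show ?case by (cases "l < 0") (auto simp: trinom_neg2 trinom_alt)
next
  case (Suc m)
  have "fls_nth (XX ^ Suc m) l = fls_nth (XX ^ m) (l - 1) + fls_nth (XX ^ m) l + fls_nth (XX ^ m) (l + 1)"
    by (simp add: XX_times_nth)
  also have "\<dots> = (\<Sum>a\<in>{0..m}. trinom m (int a) (int a + (l - 1))) + (\<Sum>a\<in>{0..m}. trinom m (int a) (int a + l))
      + (\<Sum>a\<in>{0..m}. trinom m (int a) (int a + (l + 1)))" using Suc by simp
  also have "\<dots> = (\<Sum>a\<in>{0..Suc m}. trinom m (int a - 1) (int a + l)) + (\<Sum>a\<in>{0..Suc m}. trinom m (int a) (int a + l - 1))
      + (\<Sum>a\<in>{0..Suc m}. trinom m (int a) (int a + l))"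
  proof -
    have A: "(\<Sum>a\<in>{0..Suc m}. trinom m (int a - 1) (int a + l)) = (\<Sum>a\<in>{0..m}. trinom m (int a) (int a + (l + 1)))"
      by (subst sum.atLeast0_atMost_Suc_shift) (simp add: trinom_neg1 algebra_simps)
    have B: "(\<Sum>a\<in>{0..Suc m}. trinom m (int a) (int a + l - 1)) = (\<Sum>a\<in>{0..m}. trinom m (int a) (int a + (l - 1)))"
      by (subst sum.atLeast0_atMost_Suc) (simp add: trinom_big algebra_simps)
    have C: "(\<Sum>a\<in>{0..Suc m}. trinom m (int a) (int a + l)) = (\<Sum>a\<in>{0..m}. trinom m (int a) (int a + l))"
      by (subst sum.atLeast0_atMost_Suc) (simp add: trinom_big)
    show ?thesis unfolding A B C by simp
  qed
  also have "\<dots> = (\<Sum>a\<in>{0..Suc m}. trinom (Suc m) (int a) (int a + l))"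
    by (simp add: trinom_rec sum.distrib)
  finally show ?case .
qed

lemma XX_pow_sym: "fls_nth (XX ^ m) (- l) = fls_nth (XX ^ m) l"
proof (induction m arbitrary: l)
  case 0 thus ?case by simp
next
  case (Suc m)
  have h: "\<And>x y. x = - y \<Longrightarrow> fls_nth (XX^m) x = fls_nth (XX^m) y" using Suc.IH by blast
  have "fls_nth (XX ^ Suc m) (- l) = fls_nth (XX ^ m) (- l - 1) + fls_nth (XX ^ m) (- l) + fls_nth (XX ^ m) (- l + 1)"
    by (simp add: XX_times_nth)
  also have "\<dots> = fls_nth (XX ^ m) (l + 1) + fls_nth (XX ^ m) l + fls_nth (XX ^ m) (l - 1)"
    using h[of "-l-1" "l+1"] h[of "-l" l] h[of "-l+1" "l-1"] by simp
  also have "\<dots> = fls_nth (XX ^ Suc m) l" by (simp add: XX_times_nth)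
  finally show ?case .
qed


definition PS :: "nat \<Rightarrow> int \<Rightarrow> int list set" where
  "PS m h = {s :: int list. set s \<subseteq> {-1, 0, 1} \<and> length s = m \<and> (\<forall>j\<le>m. h + sum_list (take j s) \<ge> 0)}"

lemma MP_PS: "MP m k = card (PS m (int k))"
  unfolding MP_def PS_def by simp

lemma PS_finite: "finite (PS m h)"
proof -
  have "PS m h \<subseteq> {s. set s \<subseteq> {-1,0,1} \<and> length s = m}" unfolding PS_def by auto
  moreover have "finite {s. set s \<subseteq> ({-1,0,1}::int set) \<and> length s = m}"
    by (rule finite_lists_length_eq) simp
  ultimately show ?thesis by (rule finite_subset)
qed

lemma PS_neg: "h < 0 \<Longrightarrow> PS m h = {}"
  unfolding PS_def by force

lemma PS_0: "h \<ge> 0 \<Longrightarrow> PS 0 h = {[]}"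
  unfolding PS_def by auto

lemma PS_Suc:
  assumes "h \<ge> 0"
  shows "PS (Suc m) h = ((#) (-1) ` PS m (h - 1) \<union> (#) 0 ` PS m h) \<union> (#) 1 ` PS m (h + 1)"
proof (intro equalityI subsetI)
  fix s assume s: "s \<in> PS (Suc m) h"
  then obtain d s' where ds: "s = d # s'" unfolding PS_def by (cases s) auto
  from s ds have d: "d \<in> {-1,0,1}" and s'1: "set s' \<subseteq> {-1,0,1}" and s'2: "length s' = m"
    and c: "\<And>j. j \<le> Suc m \<Longrightarrow> h + sum_list (take j (d # s')) \<ge> 0" unfolding PS_def by auto
  have "\<And>j. j \<le> m \<Longrightarrow> (h + d) + sum_list (take j s') \<ge> 0"
    using c[of "Suc j" for j] by (simp add: add.assoc)
  hence "s' \<in> PS m (h + d)" using s'1 s'2 unfolding PS_def by auto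
  with d ds show "s \<in> ((#) (-1) ` PS m (h - 1) \<union> (#) 0 ` PS m h) \<union> (#) 1 ` PS m (h + 1)"
    by (auto simp: algebra_simps)
next
  fix s assume "s \<in> ((#) (-1) ` PS m (h - 1) \<union> (#) 0 ` PS m h) \<union> (#) 1 ` PS m (h + 1)"
  then obtain d s' where ds: "s = d # s'" and d: "d \<in> {-1,0,1}" and s': "s' \<in> PS m (h + d)"
    by (auto simp: algebra_simps)
  have "\<forall>j\<le>Suc m. h + sum_list (take j s) \<ge> 0"
  proof (intro allI impI)
    fix j assume j: "j \<le> Suc m"
    show "h + sum_list (take j s) \<ge> 0"
    proof (cases j)
      case 0 thus ?thesis using assms by simp
    next
      case (Suc j')
      hence "(h + d) + sum_list (take j' s') \<ge> 0" using s' j unfolding PS_def by auto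
      thus ?thesis using Suc ds by (simp add: add.assoc)
    qed
  qed
  thus "s \<in> PS (Suc m) h" using s' d ds unfolding PS_def by auto
qed

lemma card_PS_Suc:
  assumes "h \<ge> 0"
  shows "card (PS (Suc m) h) = card (PS m (h - 1)) + card (PS m h) + card (PS m (h + 1))"
proof -
  have inj: "\<And>d A. card ((#) (d::int) ` A) = card A" by (simp add: card_image)
  have fin: "\<And>d h. finite ((#) (d::int) ` PS m h)" using PS_finite by simp
  show ?thesis unfolding PS_Suc[OF assms]
    apply (subst card_Un_disjoint)
    apply (simp_all add: fin)
    apply force
    apply (subst card_Un_disjoint)
    apply (simp_all add: fin inj)
    apply force
    done
qed

definition wt :: "int \<Rightarrow> int fls" where
  "wt h = (\<Sum>u<nat (2 * h + 2). Y (int u - h - 1))"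

lemma tele: "(1 - Y 1) * (\<Sum>u<n. Y (int u + c)) = Y c - Y (int n + c)"
proof (induction n)
  case 0 thus ?case by simp
next
  case (Suc n)
  have "(1 - Y 1) * (\<Sum>u<Suc n. Y (int u + c)) = (Y c - Y (int n + c)) + (1 - Y 1) * Y (int n + c)"
    using Suc by (simp add: distrib_left)
  also have "\<dots> = Y c - Y (int (Suc n) + c)" by (simp add: algebra_simps)
  finally show ?case .
qed

lemma wt_tele: "h \<ge> -1 \<Longrightarrow> (1 - Y 1) * wt h = Y (- h - 1) - Y (h + 1)"
proof -
  assume h: "h \<ge> -1"
  have "(1 - Y 1) * wt h = (1 - Y 1) * (\<Sum>u<nat (2 * h + 2). Y (int u + (- h - 1)))"
    unfolding wt_def by (simp add: algebra_simps)
  also have "\<dots> = Y (- h - 1) - Y (h + 1)" using h by (subst tele) (simp add: algebra_simps)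
  finally show ?thesis .
qed

lemma one_minus_Y1_nz: "(1 - Y 1) \<noteq> 0"
proof
  assume "1 - Y 1 = 0"
  hence "fls_nth (1 - Y 1) 0 = 0" by simp
  thus False by simp
qed

lemma XX_Y: "XX * Y a = Y (a + 1) + Y a + Y (a - 1)"
  by (simp add: XX_def distrib_right add.commute)

lemma XX_wt:
  assumes "h \<ge> 0"
  shows "XX * wt h = wt (h + 1) + wt h + wt (h - 1)"
proof -
  have "(1 - Y 1) * (XX * wt h) = XX * ((1 - Y 1) * wt h)" by (simp add: algebra_simps)
  also have "\<dots> = XX * (Y (- h - 1) - Y (h + 1))" using assms by (simp add: wt_tele)
  also have "\<dots> = (Y (- h - 2) - Y (h + 2)) + (Y (- h - 1) - Y (h + 1)) + (Y (- h) - Y h)"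
    by (simp add: right_diff_distrib XX_Y algebra_simps)
  also have "\<dots> = (Y (-(h+1)-1) - Y(h+1+1)) + (Y(-h-1) - Y(h+1)) + (Y(-(h-1)-1) - Y(h-1+1))"
    by (simp add: algebra_simps)
  also have "\<dots> = (1 - Y 1) * wt (h+1) + (1 - Y 1) * wt h + (1 - Y 1) * wt (h-1)"
    using assms by (simp only: wt_tele[of "h+1"] wt_tele[of h] wt_tele[of "h-1"])
  also have "\<dots> = (1 - Y 1) * (wt (h + 1) + wt h + wt (h - 1))"
    by (simp only: distrib_left)
  finally show ?thesis using one_minus_Y1_nz by simp
qed

definition Tm :: "nat \<Rightarrow> int \<Rightarrow> int" where
  "Tm m h = fls_nth (XX ^ m * wt h) 0"

lemma wt_m1: "wt (-1) = 0" by (simp add: wt_def)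

lemma wt_nth0: "h \<ge> 0 \<Longrightarrow> fls_nth (wt h) 0 = 1"
proof -
  assume h: "h \<ge> 0"
  have "fls_nth (wt h) 0 = (\<Sum>u<nat (2 * h + 2). (if int u = h + 1 then 1 else 0))"
    unfolding wt_def fls_nth_sum by (intro sum.cong) auto
  also have "\<dots> = (\<Sum>u<nat (2 * h + 2). (if u = nat (h + 1) then 1 else 0))"
    using h by (intro sum.cong) auto
  also have "\<dots> = 1" using h by (simp add: sum.delta'[of "{..<nat (2 * h + 2)}" "nat (h + 1)" "\<lambda>_. 1::int"])
  finally show ?thesis .
qed

lemma F_eq_Tm: "h \<ge> -1 \<Longrightarrow> int (card (PS m h)) = Tm m h"
proof (induction m arbitrary: h)
  case 0
  show ?case
  proof (cases "h = -1")
    case True thus ?thesis by (simp add: PS_neg Tm_def wt_m1)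
  next
    case False
    hence "h \<ge> 0" using 0 by simp
    thus ?thesis by (simp add: PS_0 Tm_def wt_nth0)
  qed
next
  case (Suc m)
  show ?case
  proof (cases "h = -1")
    case True thus ?thesis by (simp add: PS_neg Tm_def wt_m1)
  next
    case False
    hence h: "h \<ge> 0" using Suc by simp
    have "Tm (Suc m) h = fls_nth (XX ^ m * (XX * wt h)) 0" unfolding Tm_def by (simp add: algebra_simps)
    also have "\<dots> = Tm m (h + 1) + Tm m h + Tm m (h - 1)" unfolding Tm_def XX_wt[OF h]
      by (simp add: distrib_left)
    also have "\<dots> = int (card (PS (Suc m) h))" using Suc.IH[of "h+1"] Suc.IH[of h] Suc.IH[of "h - 1"] h
      by (simp add: card_PS_Suc)
    finally show ?thesis by simp
  qed
qed

lemma Tm_sum: "h \<ge> 0 \<Longrightarrow> Tm m h = (\<Sum>l\<in>{- h..h + 1}. fls_nth (XX ^ m) l)"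
proof -
  assume h: "h \<ge> 0"
  have "Tm m h = (\<Sum>u<nat (2 * h + 2). fls_nth (XX ^ m) (h + 1 - int u))"
    unfolding Tm_def wt_def sum_distrib_left fls_nth_sum times_Y_nth by (intro sum.cong) (auto simp: algebra_simps)
  also have "\<dots> = (\<Sum>l\<in>{- h..h + 1}. fls_nth (XX ^ m) l)"
    by (rule sum.reindex_bij_witness[of _ "\<lambda>l. nat (h + 1 - l)" "\<lambda>u. h + 1 - int u"]) auto
  finally show ?thesis .
qed

lemma MP_Tm: "int (MP m k) = Tm m (int k)"
  using F_eq_Tm[of "int k" m] by (simp add: MP_PS)

lemma entry_Tm: "(\<Sum>a\<in>{0..m}. \<Sum>l\<in>{- int k..int k + 1}. trinom m (int a) (int a + l)) = Tm m (int k)"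
  by (simp add: Tm_sum XX_pow_nth sum.swap[of _ "{0..m}"])


lemma poly_sum_monoms_lt: "degree p < n \<Longrightarrow> (\<Sum>a<n. monom (coeff p a) a) = p"
  by (intro poly_eqI) (auto simp: coeff_sum coeff_monom coeff_eq_0 sum.delta')

lemma det_unitri:
  assumes "\<And>i a. i < a \<Longrightarrow> a < n \<Longrightarrow> f i a = 0" "\<And>i. i < n \<Longrightarrow> f i i = (1::int)"
  shows "det (mat n n (\<lambda>(i,a). f i a)) = 1"
proof -
  have "det (mat n n (\<lambda>(i,a). f i a)) = prod_list (diag_mat (mat n n (\<lambda>(i,a). f i a)))"
    by (rule det_lower_triangular[of n]) (auto simp: assms)
  also have "diag_mat (mat n n (\<lambda>(i,a). f i a)) = map (\<lambda>_. 1) [0..<n]"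
    unfolding diag_mat_def by (intro map_cong) (auto simp: assms(2))
  also have "prod_list (map (\<lambda>_. 1::int) [0..<n]) = 1" by (induction n) auto
  finally show ?thesis .
qed

lemma basis_change_det:
  fixes L :: "int poly \<Rightarrow> int" and P Q :: "nat \<Rightarrow> int poly"
  assumes Ladd: "\<And>p q. L (p + q) = L p + L q"
    and Lsmult: "\<And>c p. L (smult c p) = c * L p"
    and P: "\<And>i. i < n \<Longrightarrow> degree (P i) \<le> i \<and> coeff (P i) i = 1"
    and Q: "\<And>i. i < n \<Longrightarrow> degree (Q i) \<le> i \<and> coeff (Q i) i = 1"
  shows "det (mat n n (\<lambda>(i,j). L (P i * Q j))) = det (mat n n (\<lambda>(i,j). L (monom 1 (i + j))))"
proof -
  have L0: "L 0 = 0" using Lsmult[of 0 0] by simp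
  have Lsum: "\<And>f A. finite A \<Longrightarrow> L (sum f A) = (\<Sum>x\<in>A. L (f x))"
  proof -
    fix f :: "'b \<Rightarrow> int poly" and A :: "'b set" assume "finite A"
    thus "L (sum f A) = (\<Sum>x\<in>A. L (f x))" by (induction A rule: finite_induct) (auto simp: L0 Ladd)
  qed
  define Pm where "Pm = mat n n (\<lambda>(i,a). coeff (P i) a)"
  define Qm where "Qm = mat n n (\<lambda>(i,a). coeff (Q i) a)"
  define H where "H = mat n n (\<lambda>(a,b). L (monom 1 (a + b)))"
  have carr: "Pm \<in> carrier_mat n n" "Qm \<in> carrier_mat n n" "H \<in> carrier_mat n n"
    unfolding Pm_def Qm_def H_def by auto
  have eq: "mat n n (\<lambda>(i,j). L (P i * Q j)) = Pm * H * transpose_mat Qm"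
  proof (rule eq_matI)
    fix i j assume ij: "i < dim_row (Pm * H * transpose_mat Qm)" "j < dim_col (Pm * H * transpose_mat Qm)"
    hence i: "i < n" and j: "j < n" using carr by auto
    have Pi: "P i = (\<Sum>a<n. monom (coeff (P i) a) a)" using P[OF i] i
      by (intro poly_sum_monoms_lt[symmetric]) auto
    have Qj: "Q j = (\<Sum>b<n. monom (coeff (Q j) b) b)" using Q[OF j] j
      by (intro poly_sum_monoms_lt[symmetric]) auto
    have "P i * Q j = (\<Sum>a<n. \<Sum>b<n. smult (coeff (P i) a * coeff (Q j) b) (monom 1 (a + b)))"
      apply (subst Pi, subst Qj) apply (simp add: sum_distrib_left sum_distrib_right mult_monom smult_monom mult.commute) by (rule sum.swap)
    hence "L (P i * Q j) = (\<Sum>a<n. \<Sum>b<n. coeff (P i) a * coeff (Q j) b * L (monom 1 (a + b)))"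
      by (simp add: Lsum Lsmult)
    also have "\<dots> = (Pm * H * transpose_mat Qm) $$ (i, j)"
      using i j carr unfolding Pm_def Qm_def H_def
      by (simp add: scalar_prod_def sum_distrib_left sum_distrib_right atLeast0LessThan algebra_simps)
        (subst sum.swap, simp add: algebra_simps)
    finally show "mat n n (\<lambda>(i,j). L (P i * Q j)) $$ (i, j) = (Pm * H * transpose_mat Qm) $$ (i, j)"
      using i j by simp
  qed (use carr in auto)
  have dP: "det Pm = 1" unfolding Pm_def
  proof (rule det_unitri)
    fix i a assume "i < a" "a < n" then show "coeff (P i) a = 0" using P[of i] by (intro coeff_eq_0) auto
  next
    fix i assume "i < n" thus "coeff (P i) i = 1" using P by auto
  qed
  have dQ0: "det Qm = 1" unfolding Qm_def
  proof (rule det_unitri)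
    fix i a assume "i < a" "a < n" then show "coeff (Q i) a = 0" using Q[of i] by (intro coeff_eq_0) auto
  next
    fix i assume "i < n" thus "coeff (Q i) i = 1" using Q by auto
  qed
  have dQ: "det (transpose_mat Qm) = 1" using det_transpose[OF carr(2)] dQ0 by simp
  have "det (Pm * H * transpose_mat Qm) = det Pm * det H * det (transpose_mat Qm)"
    using carr by (simp add: det_mult[of _ n])
  thus ?thesis unfolding eq dP dQ H_def by simp
qed


definition ev :: "int poly \<Rightarrow> int fls" where "ev p = poly (of_int_poly p) XX"

lemma ev_mult: "ev (p * q) = ev p * ev q" by (simp add: ev_def of_int_poly_hom.hom_mult)
lemma ev_add: "ev (p + q) = ev p + ev q" by (simp add: ev_def of_int_poly_hom.hom_add)
lemma ev_diff: "ev (p - q) = ev p - ev q" by (simp add: ev_def of_int_poly_hom.hom_minus)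
lemma ev_smult: "ev (smult c p) = of_int c * ev p" by (simp add: ev_def of_int_hom.map_poly_hom_smult)
lemma ev_pCons: "ev (pCons a p) = of_int a + XX * ev p" by (simp add: ev_def of_int_hom.map_poly_pCons_hom)
lemma ev_1: "ev 1 = 1" by (simp add: ev_def)
lemma ev_monom1: "ev (monom 1 n) = XX ^ n" by (simp add: ev_def of_int_hom.map_poly_hom_monom poly_monom)

lemma of_int_fls_nth: "fls_nth (of_int a :: int fls) n = (if n = 0 then a else 0)"
  by (simp add: fls_of_int_nth)

lemma ev_sym: "fls_nth (ev p) (- n) = fls_nth (ev p) n"
proof (induction p arbitrary: n rule: pCons_induct)
  case 0 thus ?case by (simp add: ev_def)
next
  case (pCons a p)
  have h: "\<And>x y. x = - y \<Longrightarrow> fls_nth (ev p) x = fls_nth (ev p) y" using pCons.IH by blast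
  show ?case unfolding ev_pCons
    using h[of "-n-1" "n+1"] h[of "-n" n] h[of "-n+1" "n-1"]
    by (simp add: XX_times_nth of_int_fls_nth)
qed

definition L :: "nat \<Rightarrow> int poly \<Rightarrow> int" where "L k p = fls_nth (ev p * wt (int k)) 0"

lemma L_add: "L k (p + q) = L k p + L k q" by (simp add: L_def ev_add distrib_right)
lemma L_smult: "L k (smult c p) = c * L k p"
  by (simp add: L_def ev_smult mult.assoc)
fun Ap :: "nat \<Rightarrow> int poly" where
  "Ap 0 = 1" | "Ap (Suc 0) = [:-2,1:]" | "Ap (Suc (Suc i)) = [:-1,1:] * Ap (Suc i) - Ap i"

fun Bp :: "nat \<Rightarrow> int poly" where
  "Bp 0 = 1" | "Bp (Suc 0) = [:0,1:]" | "Bp (Suc (Suc i)) = [:-1,1:] * Bp (Suc i) - Bp i"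

lemma ev_0[simp]: "ev 0 = 0" by (simp add: ev_def)
lemma ev_lin: "ev [:c, 1:] = of_int c + XX" by (simp add: ev_pCons)

lemma XX_eq: "XX = Y 1 + 1 + Y (-1)" by (simp add: XX_def)

lemma Ym1: "Y 1 * Y (-1) = 1" by simp

lemma ev_A: "(1 + Y 1) * ev (Ap i) = Y (int i + 1) + Y (- int i)"
proof (induction i rule: Ap.induct)
  case 1 thus ?case by (simp add: ev_1 add.commute)
next
  case 2 thus ?case by (simp add: ev_lin XX_eq algebra_simps)
next
  case (3 i)
  have "(1 + Y 1) * ev (Ap (Suc (Suc i))) = (Y 1 + Y (-1)) * ((1 + Y 1) * ev (Ap (Suc i))) - (1 + Y 1) * ev (Ap i)"
    by (simp only: Ap.simps ev_diff ev_mult ev_lin XX_eq) (simp add: algebra_simps)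
  also have "\<dots> = (Y 1 + Y (-1)) * (Y (int (Suc i) + 1) + Y (- int (Suc i))) - (Y (int i + 1) + Y (- int i))"
    by (simp only: 3)
  also have "\<dots> = Y (int (Suc (Suc i)) + 1) + Y (- int (Suc (Suc i)))"
    by (intro fls_eqI) (auto simp: algebra_simps)
  finally show ?case .
qed

lemma ev_B: "(1 - Y 1) * ev (Bp i) = Y (- int i) - Y (int i + 1)"
proof (induction i rule: Bp.induct)
  case 1 thus ?case by (simp add: ev_1)
next
  case 2 thus ?case by (simp add: ev_lin XX_eq algebra_simps)
next
  case (3 i)
  have "(1 - Y 1) * ev (Bp (Suc (Suc i))) = (Y 1 + Y (-1)) * ((1 - Y 1) * ev (Bp (Suc i))) - (1 - Y 1) * ev (Bp i)"
    by (simp only: Bp.simps ev_diff ev_mult ev_lin XX_eq) (simp add: algebra_simps)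
  also have "\<dots> = (Y 1 + Y (-1)) * (Y (- int (Suc i)) - Y (int (Suc i) + 1)) - (Y (- int i) - Y (int i + 1))"
    by (simp only: 3)
  also have "\<dots> = Y (- int (Suc (Suc i))) - Y (int (Suc (Suc i)) + 1)"
    by (intro fls_eqI) (auto simp: algebra_simps)
  finally show ?case .
qed

lemma ev_x3: "Y 1 * ev [:-3, 1:] = (1 - Y 1)^2"
  by (simp add: ev_lin XX_eq algebra_simps power2_eq_square)

lemma wt_nth: "h \<ge> 0 \<Longrightarrow> fls_nth (wt h) n = (if - h - 1 \<le> n \<and> n \<le> h then 1 else 0)"
proof -
  assume h: "h \<ge> 0"
  have "fls_nth (wt h) n = (\<Sum>u<nat (2 * h + 2). (if int u = n + h + 1 then 1 else 0))"
    unfolding wt_def fls_nth_sum by (intro sum.cong) auto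
  also have "\<dots> = (\<Sum>u<nat (2 * h + 2). (if u = nat (n + h + 1) \<and> n + h + 1 \<ge> 0 then 1 else 0))"
    by (intro sum.cong) auto
  also have "\<dots> = (if - h - 1 \<le> n \<and> n \<le> h then 1 else 0)"
  proof (cases "n + h + 1 \<ge> 0")
    case True thus ?thesis using h by (simp add: sum.delta'[of "{..<nat (2 * h + 2)}" "nat (n + h + 1)" "\<lambda>_. 1::int"])
  next
    case False thus ?thesis by simp
  qed
  finally show ?thesis .
qed

lemma L_sym2: "2 * L k p = fls_nth (ev p * ((1 + Y 1) * wt (int k))) 0"
proof -
  have e1: "fls_nth (ev p * ((1 + Y 1) * wt (int k))) 0 = fls_nth (ev p * wt (int k)) 0 + fls_nth (ev p * (Y 1 * wt (int k))) 0"
    by (simp only: distrib_left distrib_right mult_1_left fls_plus_nth)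
  have "ev p * wt (int k) - ev p * (Y 1 * wt (int k)) = ev p * ((1 - Y 1) * wt (int k))"
    by (simp only: left_diff_distrib right_diff_distrib mult_1_left)
  also have "\<dots> = ev p * Y (- int k - 1) - ev p * Y (int k + 1)"
    by (simp only: wt_tele[of "int k"] right_diff_distrib)
  finally have eq: "ev p * wt (int k) - ev p * (Y 1 * wt (int k)) = ev p * Y (- int k - 1) - ev p * Y (int k + 1)" .
  have s1: "fls_nth (ev p * Y (- int k - 1)) 0 = fls_nth (ev p * Y (int k + 1)) 0"
  proof -
    have a: "- (- int k - 1) = int k + 1" "0 - (int k + 1) = - (int k + 1)" "0 - (- int k - 1) = - (- int k - 1)" by simp_all
    have "fls_nth (ev p * Y (- int k - 1)) 0 = fls_nth (ev p) (int k + 1)"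
      by (simp only: times_Y_nth a)
    also have "\<dots> = fls_nth (ev p) (- (int k + 1))" by (rule ev_sym[symmetric])
    also have "\<dots> = fls_nth (ev p * Y (int k + 1)) 0" by (simp only: times_Y_nth a)
    finally show ?thesis .
  qed
  have "fls_nth (ev p * wt (int k)) 0 - fls_nth (ev p * (Y 1 * wt (int k))) 0
     = fls_nth (ev p * wt (int k) - ev p * (Y 1 * wt (int k))) 0" by (rule fls_minus_nth[symmetric])
  also have "\<dots> = fls_nth (ev p * Y (- int k - 1)) 0 - fls_nth (ev p * Y (int k + 1)) 0"
    unfolding eq by (rule fls_minus_nth)
  also have "\<dots> = 0" by (simp only: s1 diff_self)
  finally have "fls_nth (ev p * wt (int k)) 0 - fls_nth (ev p * (Y 1 * wt (int k))) 0 = 0" .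
  thus ?thesis unfolding L_def e1 by simp
qed

lemma one_plus_Y1_nz: "(1 + Y 1) \<noteq> 0"
proof
  assume "1 + Y 1 = 0"
  hence "fls_nth (1 + Y 1) 0 = 0" by simp
  thus False by simp
qed

lemma LA0: "L k (Ap i) = (if i \<le> k then 1 else 0)"
proof -
  have "2 * L k (Ap i) = fls_nth ((1 + Y 1) * ev (Ap i) * wt (int k)) 0"
    unfolding L_sym2 by (simp only: mult_ac)
  also have "\<dots> = fls_nth (Y (int i + 1) * wt (int k) + Y (- int i) * wt (int k)) 0"
    unfolding ev_A by (simp only: distrib_right)
  also have "\<dots> = 2 * (if i \<le> k then 1 else 0)" by (simp add: wt_nth)
  finally show ?thesis by simp
qed

lemma LAQ:
  "L k (Ap i * ([:-3,1:] * Bp j')) = (if i = Suc j' + k then 1 else 0) - (if Suc j' = i + k + 2 then 1 else 0)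
      - (if i + Suc j' = k + 1 then 1 else 0)"
proof -
  define G where "G = ev (Ap i) * (ev [:-3,1:] * ev (Bp j')) * ((1 + Y 1) * wt (int k))"
  define M1 where "M1 = Y (int i + 1) + Y (- int i)"
  define M2 where "M2 = Y (- int j') - Y (int j' + 1)"
  define M3 where "M3 = Y (- int k - 1) - Y (int k + 1)"
  have "G * Y 1 * ((1 + Y 1) * (1 - Y 1)) = ((1 + Y 1) * ev (Ap i)) * (Y 1 * ev [:-3,1:]) * ((1 - Y 1) * ev (Bp j')) * (1 + Y 1) * wt (int k)"
    unfolding G_def by (simp only: mult_ac)
  also have "\<dots> = M1 * (1 - Y 1)^2 * M2 * (1 + Y 1) * wt (int k)"
    unfolding M1_def M2_def ev_A ev_B ev_x3 ..
  also have "\<dots> = M1 * M2 * ((1 - Y 1) * wt (int k)) * ((1 + Y 1) * (1 - Y 1))"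
    by (simp only: mult_ac power2_eq_square)
  also have "\<dots> = (M1 * M2 * M3) * ((1 + Y 1) * (1 - Y 1))"
    unfolding M3_def by (simp add: wt_tele)
  finally have "G * Y 1 = M1 * M2 * M3" using one_plus_Y1_nz one_minus_Y1_nz by simp
  hence "fls_nth G 0 = fls_nth (M1 * M2 * M3) 1" by (metis cancel_comm_monoid_add_class.diff_cancel times_Y_nth)
  moreover have "2 * L k (Ap i * ([:-3,1:] * Bp j')) = fls_nth G 0"
    unfolding L_sym2 G_def ev_mult by (simp only: mult_ac)
  moreover have "fls_nth (M1 * M2 * M3) 1 = 2 * ((if i = Suc j' + k then 1 else 0) - (if Suc j' = i + k + 2 then 1 else 0)
      - (if i + Suc j' = k + 1 then 1 else 0))"
    unfolding M1_def M2_def M3_def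
    apply (simp only: distrib_left distrib_right left_diff_distrib right_diff_distrib Y_mult fls_plus_nth fls_minus_nth Y_nth)
    by (cases "i = Suc j' + k"; cases "Suc j' = i + k + 2"; cases "i + Suc j' = k + 1") simp_all
  ultimately show ?thesis by simp
qed


fun Qp :: "nat \<Rightarrow> nat \<Rightarrow> int poly" where
  "Qp k j = (if j = 0 then 1 else [:-3,1:] * Bp (j - 1) + (if 2 * k + 2 < j then Qp k (j - (2 * k + 2)) else 0))"

declare Qp.simps[simp del]

definition foldk :: "nat \<Rightarrow> nat \<Rightarrow> nat" where
  "foldk k v = (if v mod (2*k+2) \<le> k then v mod (2*k+2) else 2*k+1 - v mod (2*k+2))"

definition Fent :: "nat \<Rightarrow> nat \<Rightarrow> nat \<Rightarrow> int" where
  "Fent k i j = (if j = 0 then (if i \<le> k then 1 else 0)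
      else (if i = j + k then 1 else 0) - (if i = foldk k (j + k) then 1 else 0))"

lemma fold_1: "k + 1 \<le> v \<Longrightarrow> v \<le> 2*k+1 \<Longrightarrow> foldk k v = 2*k+1 - v"
  by (simp add: foldk_def)

lemma fold_2: "2*k+2 \<le> v \<Longrightarrow> v \<le> 3*k+2 \<Longrightarrow> foldk k v = v - (2*k+2)"
proof -
  assume a: "2*k+2 \<le> v" "v \<le> 3*k+2"
  have "v mod (2*k+2) = (v - (2*k+2)) mod (2*k+2)" using a(1) by (rule le_mod_geq)
  also have "\<dots> = v - (2*k+2)" using a by (intro mod_less) linarith
  finally have m: "v mod (2*k+2) = v - (2*k+2)" .
  show ?thesis unfolding foldk_def m using a by simp
qed

lemma fold_per: "foldk k (v + (2*k+2)) = foldk k v"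
  by (simp only: foldk_def mod_add_self2)

lemma L_zero: "L k 0 = 0" by (simp add: L_def)

lemma LQ: "L k (Ap i * Qp k j) = Fent k i j"
proof (induction j rule: less_induct)
  case (less j)
  show ?case
  proof (cases j)
    case 0 thus ?thesis by (simp add: Qp.simps Fent_def LA0)
  next
    case (Suc j')
    have rec: "L k (Ap i * Qp k j) = L k (Ap i * ([:-3,1:] * Bp j'))
        + (if 2 * k + 2 < j then L k (Ap i * Qp k (j - (2 * k + 2))) else 0)"
      using Suc by (subst Qp.simps) (simp add: distrib_left L_add L_zero)
    show ?thesis
    proof (cases "2 * k + 2 < j")
      case True
      have IH: "L k (Ap i * Qp k (j - (2 * k + 2))) = Fent k i (j - (2 * k + 2))"
        using less True by simp
      have jj: "j + k = (j - (2 * k + 2) + k) + (2 * k + 2)" using True by simp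
      have f: "foldk k (j + k) = foldk k (j - (2*k+2) + k)"
        by (subst jj) (rule fold_per)
      define F where "F = foldk k (j - (2*k+2) + k)"
      have F1: "Fent k i (j - (2 * k + 2)) = (if i = j - (2*k+2) + k then 1 else 0) - (if i = F then 1 else 0)"
        using True unfolding F_def Fent_def by simp
      have F2: "Fent k i j = (if i = j + k then 1 else 0) - (if i = F then 1 else 0)"
        using Suc unfolding F_def Fent_def f by simp
      show ?thesis unfolding rec IH LAQ F1 F2 using True Suc by simp
    next
      case False
      show ?thesis
      proof (cases "j \<le> k + 1")
        case True
        have "foldk k (j + k) = k + 1 - j" using True Suc by (subst fold_1) auto
        thus ?thesis unfolding rec LAQ using True Suc by (auto simp: Fent_def)
      next
        case False2: False
        have "foldk k (j + k) = j - k - 2" using False False2 Suc by (subst fold_2) auto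
        thus ?thesis unfolding rec LAQ using False False2 Suc by (auto simp: Fent_def)
      qed
    qed
  qed
qed

lemma lin_step:
  fixes p s :: "int poly"
  assumes "degree p \<le> d" "coeff p d = 1" "degree s \<le> d"
  shows "degree ([:c,1:] * p - s) \<le> Suc d \<and> coeff ([:c,1:] * p - s) (Suc d) = 1"
proof -
  have e: "[:c,1:] * p = smult c p + pCons 0 p" by (simp add: mult_pCons_left)
  have "degree ([:c,1:] * p) \<le> Suc d" unfolding e
    by (rule degree_add_le) (use assms in \<open>auto intro: le_SucI degree_smult_le[THEN order_trans]\<close>)
  hence "degree ([:c,1:] * p - s) \<le> Suc d" using assms(3) by (meson degree_diff_le le_SucI)
  moreover have "coeff ([:c,1:] * p - s) (Suc d) = 1"
    unfolding e using assms by (simp add: coeff_eq_0 smult_1_left)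
  ultimately show ?thesis by simp
qed

lemma Ap_deg: "degree (Ap i) \<le> i \<and> coeff (Ap i) i = 1"
proof (induction i rule: Ap.induct)
  case (3 i)
  thus ?case using lin_step[of "Ap (Suc i)" "Suc i" "Ap i" "-1"] by simp
qed auto

lemma Bp_deg: "degree (Bp i) \<le> i \<and> coeff (Bp i) i = 1"
proof (induction i rule: Bp.induct)
  case (3 i)
  thus ?case using lin_step[of "Bp (Suc i)" "Suc i" "Bp i" "-1"] by simp
qed auto

lemma Qp_deg: "degree (Qp k j) \<le> j \<and> coeff (Qp k j) j = 1"
proof (induction j rule: less_induct)
  case (less j)
  show ?case
  proof (cases j)
    case 0 thus ?thesis by (simp add: Qp.simps)
  next
    case (Suc j')
    have h: "degree ([:-3,1:] * Bp j' - 0) \<le> Suc j' \<and> coeff ([:-3,1:] * Bp j' - 0) (Suc j') = 1"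
      using Bp_deg[of j'] by (intro lin_step) auto
    define R where "R = (if 2 * k + 2 < j then Qp k (j - (2 * k + 2)) else 0)"
    have R: "degree R < j"
    proof (cases "2 * k + 2 < j")
      case True
      hence "degree R \<le> j - (2*k+2)" using less[of "j - (2*k+2)"] by (simp add: R_def)
      thus ?thesis using True by simp
    qed (use Suc in \<open>simp add: R_def\<close>)
    have eq: "Qp k j = [:-3,1:] * Bp j' + R" using Suc by (subst Qp.simps) (simp add: R_def)
    have "degree (Qp k j) \<le> j" unfolding eq using h R Suc
      by (metis degree_add_le diff_zero less_imp_le_nat)
    moreover have "coeff (Qp k j) j = 1" unfolding eq using h R Suc by (simp add: coeff_eq_0)
    ultimately show ?thesis by simp
  qed
qed

lemma hankel_F: "det (mat n n (\<lambda>(i,j). Tm (i + j) (int k))) = det (mat n n (\<lambda>(i,j). Fent k i j))"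
proof -
  have "det (mat n n (\<lambda>(i,j). L k (Ap i * Qp k j))) = det (mat n n (\<lambda>(i,j). L k (monom 1 (i + j))))"
    by (rule basis_change_det) (auto simp: L_add L_smult Ap_deg Qp_deg)
  moreover have "mat n n (\<lambda>(i,j). L k (Ap i * Qp k j)) = mat n n (\<lambda>(i,j). Fent k i j)"
    by (simp add: LQ)
  moreover have "mat n n (\<lambda>(i,j). L k (monom 1 (i + j))) = mat n n (\<lambda>(i,j). Tm (i + j) (int k))"
    by (simp add: L_def ev_monom1 Tm_def)
  ultimately show ?thesis by simp
qed


lemma lap_row:
  fixes A :: "int mat"
  assumes A: "A \<in> carrier_mat (Suc p) (Suc p)" and r: "r < Suc p"
    and z: "\<And>j. 0 < j \<Longrightarrow> j < Suc p \<Longrightarrow> A $$ (r, j) = 0"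
  shows "det A = (-1) ^ r * A $$ (r, 0) * det (mat_delete A r 0)"
proof -
  have "det A = (\<Sum>j<Suc p. A $$ (r,j) * cofactor A r j)" by (rule laplace_expansion_row[OF A r])
  also have "\<dots> = A $$ (r,0) * cofactor A r 0"
    by (subst sum.lessThan_Suc_shift) (simp add: z)
  finally show ?thesis by (simp add: cofactor_def)
qed

lemma mat_delete_idx:
  "i < p \<Longrightarrow> j < p \<Longrightarrow> mat_delete (mat (Suc p) (Suc p) f) r c $$ (i, j)
     = f (if i < r then i else Suc i, if j < c then j else Suc j)"
  unfolding mat_delete_def by simp

lemma mat_delete_dims: "mat_delete (mat (Suc p) (Suc p) f) r c \<in> carrier_mat p p"
  unfolding mat_delete_def by simp

definition Rm :: "nat \<Rightarrow> int mat" where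
  "Rm p = mat p p (\<lambda>(i,j). if i + j + 1 = p then 1 else 0)"

lemma det_Rm: "det (Rm p) = (-1) ^ (p choose 2)"
proof (induction p)
  case 0 thus ?case by (simp add: Rm_def binomial_eq_0)
next
  case (Suc p)
  have "det (Rm (Suc p)) = (-1) ^ p * Rm (Suc p) $$ (p, 0) * det (mat_delete (Rm (Suc p)) p 0)"
    by (rule lap_row) (auto simp: Rm_def)
  also have "mat_delete (Rm (Suc p)) p 0 = Rm p"
    by (rule eq_matI) (auto simp: Rm_def mat_delete_def)
  also have "Rm (Suc p) $$ (p, 0) = 1" by (simp add: Rm_def)
  finally have "det (Rm (Suc p)) = (-1) ^ p * (-1) ^ (p choose 2)" using Suc by simp
  also have "\<dots> = (-1) ^ (Suc p choose 2)" by (simp add: power_add[symmetric] numeral_2_eq_2)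
  finally show ?case .
qed

lemma det_negI: "det (mat p p (\<lambda>(i,j). if i = j then -1 else 0) :: int mat) = (-1) ^ p"
proof -
  have "mat p p (\<lambda>(i,j). if i = j then -1 else 0) = (-1 :: int) \<cdot>\<^sub>m 1\<^sub>m p"
    by (rule eq_matI) auto
  thus ?thesis by (simp add: det_smult)
qed

lemma det_negR: "det (mat p p (\<lambda>(i,j). if i + j + 1 = p then -1 else 0) :: int mat) = (-1) ^ p * (-1) ^ (p choose 2)"
proof -
  have "mat p p (\<lambda>(i,j). if i + j + 1 = p then -1 else 0) = (-1 :: int) \<cdot>\<^sub>m Rm p"
    by (rule eq_matI) (auto simp: Rm_def)
  moreover have "dim_col (Rm p) = p" by (simp add: Rm_def)
  ultimately show ?thesis by (simp add: det_Rm)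
qed

lemma fold_le: "foldk k v \<le> k"
proof -
  have "v mod (2*k+2) < 2*k+2" by simp
  thus ?thesis by (auto simp: foldk_def)
qed

definition Xm :: "nat \<Rightarrow> nat \<Rightarrow> int mat" where
  "Xm k n = mat (Suc k) (Suc k) (\<lambda>(i,c). if c = 0 then 1 else - (if i = foldk k (n + (c - 1)) then 1 else 0))"

lemma Xm_carrier: "Xm k n \<in> carrier_mat (Suc k) (Suc k)" by (simp add: Xm_def)

lemma mod_shift: "(n + c) mod (2*k+2) = (n mod (2*k+2) + c) mod (2*k+2)" for n c k :: nat
  by (simp add: mod_add_left_eq)

lemma foldB: "n mod (2*k+2) = 1 \<Longrightarrow> c < k \<Longrightarrow> foldk k (n + c) = c + 1"
  unfolding foldk_def mod_shift[of n c k] by auto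

lemma foldC: "n mod (2*k+2) = 0 \<Longrightarrow> c < k \<Longrightarrow> foldk k (n + c) = c"
  unfolding foldk_def mod_shift[of n c k] by auto

lemma foldD: "n mod (2*k+2) = k + 1 \<Longrightarrow> c < k \<Longrightarrow> foldk k (n + c) = k - c"
  unfolding foldk_def mod_shift[of n c k] by auto

lemma foldE: "n mod (2*k+2) = k + 2 \<Longrightarrow> c < k \<Longrightarrow> foldk k (n + c) = k - 1 - c"
  unfolding foldk_def mod_shift[of n c k] by auto

lemma Xm_entry: "i < Suc k \<Longrightarrow> c < k \<Longrightarrow> Xm k n $$ (i, Suc c) = - (if i = foldk k (n + c) then 1 else 0)"
  by (simp add: Xm_def)

lemma Xm_zero_row:
  assumes r: "r < Suc k" and h: "\<And>c. c < k \<Longrightarrow> r \<noteq> foldk k (n + c)"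
  shows "\<And>j. 0 < j \<Longrightarrow> j < Suc k \<Longrightarrow> Xm k n $$ (r, j) = 0"
proof -
  fix j assume "0 < j" "j < Suc k"
  then obtain c where c: "j = Suc c" "c < k" by (cases j) auto
  show "Xm k n $$ (r, j) = 0" using c r h[OF c(2)] by (simp add: Xm_entry)
qed

lemma det_XB: assumes "n mod (2*k+2) = 1" shows "det (Xm k n) = (-1) ^ k"
proof -
  have "det (Xm k n) = (-1) ^ 0 * Xm k n $$ (0, 0) * det (mat_delete (Xm k n) 0 0)"
    by (rule lap_row[OF Xm_carrier _ Xm_zero_row]) (use assms foldB in auto)
  also have "mat_delete (Xm k n) 0 0 = mat k k (\<lambda>(i,j). if i = j then -1 else 0)"
    by (rule eq_matI) (use assms foldB in \<open>auto simp: Xm_def mat_delete_def\<close>)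
  finally show ?thesis by (simp add: det_negI Xm_def)
qed

lemma det_XC: assumes "n mod (2*k+2) = 0" shows "det (Xm k n) = 1"
proof -
  have "det (Xm k n) = (-1) ^ k * Xm k n $$ (k, 0) * det (mat_delete (Xm k n) k 0)"
    by (rule lap_row[OF Xm_carrier _ Xm_zero_row]) (use assms foldC in auto)
  also have "mat_delete (Xm k n) k 0 = mat k k (\<lambda>(i,j). if i = j then -1 else 0)"
    by (rule eq_matI) (use assms foldC in \<open>auto simp: Xm_def mat_delete_def\<close>)
  finally show ?thesis by (simp add: det_negI Xm_def power_mult_distrib[symmetric])
qed

lemma det_XD: assumes "n mod (2*k+2) = k + 1" shows "det (Xm k n) = (-1) ^ k * (-1) ^ (k choose 2)"
proof -
  have "det (Xm k n) = (-1) ^ 0 * Xm k n $$ (0, 0) * det (mat_delete (Xm k n) 0 0)"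
    by (rule lap_row[OF Xm_carrier _ Xm_zero_row]) (use assms foldD in auto)
  also have "mat_delete (Xm k n) 0 0 = mat k k (\<lambda>(i,j). if i + j + 1 = k then -1 else 0)"
    by (rule eq_matI) (use assms foldD in \<open>auto simp: Xm_def mat_delete_def\<close>)
  finally show ?thesis using det_negR[of k] by (simp add: Xm_def)
qed

lemma det_XE: assumes "n mod (2*k+2) = k + 2" shows "det (Xm k n) = (-1) ^ (k choose 2)"
proof -
  have "det (Xm k n) = (-1) ^ k * Xm k n $$ (k, 0) * det (mat_delete (Xm k n) k 0)"
    by (rule lap_row[OF Xm_carrier _ Xm_zero_row]) (use assms foldE in auto)
  also have "mat_delete (Xm k n) k 0 = mat k k (\<lambda>(i,j). if i + j + 1 = k then -1 else 0)"
    by (rule eq_matI) (use assms foldE in \<open>auto simp: Xm_def mat_delete_def\<close>)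
  moreover have "(-1::int) ^ k * (-1) ^ k = 1" by (simp add: power_mult_distrib[symmetric])
  ultimately show ?thesis using det_negR[of k] by (simp add: Xm_def mult.assoc[symmetric])
qed


lemma fold_rep:
  assumes "v mod (k+1) = k"
  shows "foldk k v = foldk k (Suc v)"
proof -
  define w where "w = v mod (2*k+2)"
  have dv: "(k+1) dvd (2*k+2)" by (metis dvd_triv_right mult_2 nat_arith.rule0 add_mult_distrib2 mult.commute mult_2_right one_add_one)
  have "w mod (k+1) = k" unfolding w_def using assms mod_mod_cancel[OF dv] by simp
  moreover have "w < 2*k+2" unfolding w_def by simp
  ultimately have w: "w = k \<or> w = 2*k+1"
  proof -
    assume a: "w mod (k+1) = k" "w < 2*k+2"
    show ?thesis
    proof (cases "w < k+1")
      case True thus ?thesis using a by simp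
    next
      case False
      hence "w mod (k+1) = w - (k+1)" using a(2) by (simp add: le_mod_geq)
      thus ?thesis using a False by simp
    qed
  qed
  have s: "Suc v mod (2*k+2) = Suc w mod (2*k+2)" unfolding w_def by (simp add: mod_Suc_eq)
  show ?thesis
  proof (cases "w = k")
    case True
    thus ?thesis unfolding foldk_def s using w_def by simp
  next
    case False
    hence "w = 2*k+1" using w by simp
    thus ?thesis unfolding foldk_def s using w_def by simp
  qed
qed

lemma det_X_rep:
  assumes "n mod (k+1) \<noteq> 0" "n mod (k+1) \<noteq> 1"
  shows "det (Xm k n) = 0"
proof -
  define r where "r = n mod (k+1)"
  have r: "2 \<le> r" "r \<le> k" using assms unfolding r_def
    by (metis One_nat_def Suc_leI bot_nat_0.not_eq_extremum less_2_cases_iff nat_less_le not_less_eq_eq) 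
      (metis Suc_eq_plus1 less_Suc_eq_le mod_less_divisor zero_less_Suc)
  define c where "c = k - r"
  have c: "c + 1 < k" using r unfolding c_def by simp
  have vm: "(n + c) mod (k+1) = k"
  proof -
    have "(n + c) mod (k+1) = (n mod (k+1) + c) mod (k+1)" by (simp add: mod_add_left_eq)
    also have "n mod (k+1) + c = k" using r unfolding c_def r_def by simp
    finally show ?thesis by simp
  qed
  have eqf: "foldk k (n + c) = foldk k (n + (c + 1))" using fold_rep[OF vm] by simp
  have "col (Xm k n) (Suc c) = col (Xm k n) (Suc (c + 1))"
    by (rule eq_vecI) (use c eqf in \<open>auto simp: Xm_def\<close>)
  thus ?thesis by (intro det_identical_columns[OF Xm_carrier, of "Suc c" "Suc (c+1)"]) (use c in auto)
qed

lemma F_block: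
  assumes n: "Suc k \<le> n"
  shows "det (mat n n (\<lambda>(i,j). Fent k i j)) = (-1) ^ ((n - Suc k) * k) * det (Xm k n)"
proof -
  define d where "d = n - Suc k"
  have nd: "n = 1 + d + k" using n unfolding d_def by simp
  define A where "A = mat n n (\<lambda>(i,j). Fent k i j)"
  have A: "A \<in> carrier_mat n n" unfolding A_def by simp
  have "det A = (-1) ^ (d * k) * det (mat n n (\<lambda>(i,j). A $$ (i, if j < 1 then j else if j < 1 + k then j + d else j - k)))"
    by (rule det_swap_final_cols[OF A nd])
  also have "mat n n (\<lambda>(i,j). A $$ (i, if j < 1 then j else if j < 1 + k then j + d else j - k))
     = four_block_mat (Xm k n) (mat (Suc k) d (\<lambda>(i,j). Fent k i (j + 1))) (0\<^sub>m d (Suc k)) (1\<^sub>m d)"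
  proof (rule eq_matI)
    fix i j assume ij: "i < dim_row (four_block_mat (Xm k n) (mat (Suc k) d (\<lambda>(i,j). Fent k i (j + 1))) (0\<^sub>m d (Suc k)) (1\<^sub>m d))"
      "j < dim_col (four_block_mat (Xm k n) (mat (Suc k) d (\<lambda>(i,j). Fent k i (j + 1))) (0\<^sub>m d (Suc k)) (1\<^sub>m d))"
    hence i: "i < n" and j: "j < n" using nd by (auto simp: Xm_def)
    have fl: "\<And>v. foldk k v \<le> k" by (rule fold_le)
    show "mat n n (\<lambda>(i,j). A $$ (i, if j < 1 then j else if j < 1 + k then j + d else j - k)) $$ (i, j)
        = four_block_mat (Xm k n) (mat (Suc k) d (\<lambda>(i,j). Fent k i (j + 1))) (0\<^sub>m d (Suc k)) (1\<^sub>m d) $$ (i, j)"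
      using i j nd fl[of "j + d + k"] fl[of "j - k + k"] fl[of j]
      by (auto simp: A_def Xm_def Fent_def algebra_simps)
  qed (use nd in \<open>auto simp: Xm_def\<close>)
  also have "det (four_block_mat (Xm k n) (mat (Suc k) d (\<lambda>(i,j). Fent k i (j + 1))) (0\<^sub>m d (Suc k)) (1\<^sub>m d))
     = det (Xm k n) * det (1\<^sub>m d :: int mat)"
    by (rule det_four_block_mat_lower_left_zero[OF Xm_carrier]) auto
  finally show ?thesis unfolding A_def d_def by simp
qed


lemma sign_eq: "int a + int b = 2 * z \<Longrightarrow> (-1::int) ^ a = (-1) ^ b"
proof -
  assume h: "int a + int b = 2 * z"
  hence "even (int a + int b)" by simp
  hence "even (a + b)" by (metis even_of_nat of_nat_add)
  hence "even a = even b" by auto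
  thus ?thesis by (simp add: minus_one_power_iff)
qed

lemma choose2: "2 * int (k choose 2) = int k * (int k - 1)"
proof (induction k)
  case 0 thus ?case by simp
next
  case (Suc k)
  have "Suc k choose 2 = k + (k choose 2)" by (simp add: numeral_2_eq_2)
  thus ?case using Suc by (simp add: algebra_simps)
qed

lemma choose2_Suc: "int (Suc k choose 2) = int k + int (k choose 2)"
  by (simp add: numeral_2_eq_2)

lemma div_aux: "r < c \<Longrightarrow> (c * q + r) div c = (q::nat)"
proof -
  assume rc: "r < c"
  hence "(r + c * q) div c = q + r div c" by (intro div_mult_self2) simp
  thus ?thesis using rc by (simp add: add.commute)
qed

lemma det_small:
  assumes "1 \<le> n" "n \<le> k"
  shows "det (mat n n (\<lambda>(i,j). Fent k i j)) = (if n = 1 then 1 else 0)"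
proof (cases "n = 1")
  case True
  thus ?thesis by (simp add: det_single Fent_def)
next
  case False
  hence n2: "2 \<le> n" using assms by simp
  have fk: "foldk k (1 + k) = k" using fold_1[of k "1 + k"] by simp
  have "det (mat n n (\<lambda>(i,j). Fent k i j)) = (\<Sum>i<n. mat n n (\<lambda>(i,j). Fent k i j) $$ (i,1) * cofactor (mat n n (\<lambda>(i,j). Fent k i j)) i 1)"
    by (rule laplace_expansion_column) (use n2 in auto)
  also have "\<dots> = 0" using n2 assms fk by (intro sum.neutral) (auto simp: Fent_def)
  finally show ?thesis using False by simp
qed

lemma det_X0: "det (Xm 0 n) = 1"
  by (simp add: det_single Xm_def)

lemma det_F:
  assumes "1 \<le> n"
  shows "det (mat n n (\<lambda>(i,j). Fent k i j)) =
    (if n mod (k + 1) = 0 \<or> n mod (k + 1) = 1 then (-1) ^ (n div (k + 1) * ((k + 1) choose 2)) else 0)"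
proof (cases "n \<le> k")
  case True
  thus ?thesis using det_small[OF assms True] assms by auto
next
  case False
  hence nk: "Suc k \<le> n" by simp
  note FB = F_block[OF nk]
  show ?thesis
  proof (cases "k = 0")
    case True
    thus ?thesis using FB by (simp add: det_X0 binomial_eq_0)
  next
    case False
    hence k1: "1 \<le> k" by simp
    show ?thesis
    proof (cases "n mod (k + 1) = 0 \<or> n mod (k + 1) = 1")
      case False
      thus ?thesis using FB det_X_rep[of n k] by auto
    next
      case True
      define t where "t = n div (2*k+2)"
      define \<rho> where "\<rho> = n mod (2*k+2)"
      have nt: "n = (2*k+2)*t + \<rho>" unfolding t_def \<rho>_def by (rule mult_div_mod_eq[symmetric])
      have rl: "\<rho> < 2*k+2" unfolding \<rho>_def by simp
      have dv: "(k+1) dvd (2*k+2)" by (metis dvd_triv_right mult.commute mult_2_right add_mult_distrib2 mult_1 one_add_one)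
      have rm: "\<rho> mod (k+1) = n mod (k+1)" unfolding \<rho>_def using mod_mod_cancel[OF dv] by simp
      have cases: "\<rho> = 0 \<or> \<rho> = 1 \<or> \<rho> = k + 1 \<or> \<rho> = k + 2"
      proof (cases "\<rho> < k + 1")
        case True thus ?thesis using rm \<open>n mod (k + 1) = 0 \<or> n mod (k + 1) = 1\<close> by auto
      next
        case False
        hence "\<rho> mod (k+1) = \<rho> - (k+1)" using rl by (simp add: le_mod_geq)
        thus ?thesis using rm \<open>n mod (k + 1) = 0 \<or> n mod (k + 1) = 1\<close> rl False by auto
      qed
      define C where "C = (k + 1) choose 2"
      define C2 where "C2 = k choose 2"
      have CC: "int C = int k + int C2" unfolding C_def C2_def using choose2_Suc[of k] by simp
      have C2e: "2 * int C2 = int k * (int k - 1)" unfolding C2_def by (rule choose2)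
      have dn: "int (n - Suc k) = int n - int k - 1" using nk by simp
      have ni: "int n = (2 * int k + 2) * int t + int \<rho>" using nt by (simp add: algebra_simps)
      show ?thesis
      proof -
        consider "\<rho> = 1" | "\<rho> = 0" | "\<rho> = k + 1" | "\<rho> = k + 2" using cases by blast
        then show ?thesis
        proof cases
          case 1
          have "n = (k+1) * (2 * t) + 1" using nt 1 by (simp add: algebra_simps)
          hence q: "n div (k+1) = 2 * t" using k1 by (simp only: div_aux)
          have "(-1::int) ^ ((n - Suc k) * k) * det (Xm k n) = (-1) ^ ((n - Suc k) * k + k)"
            using det_XB[of n k] 1 unfolding \<rho>_def by (simp add: power_add)
          also have "\<dots> = (-1) ^ (n div (k + 1) * C)"
            by (rule sign_eq[of _ _ "int (k+1) * int t * int k + int t * int C - int C2"])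
               (insert C2e, simp only: of_nat_add of_nat_mult dn q, simp add: ni 1 CC algebra_simps)
          finally show ?thesis using FB True unfolding C_def by simp
        next
          case 2
          have "n = (k+1) * (2 * t) + 0" using nt 2 by (simp add: algebra_simps)
          hence q: "n div (k+1) = 2 * t" by (simp only: div_aux)
          have "(-1::int) ^ ((n - Suc k) * k) * det (Xm k n) = (-1) ^ ((n - Suc k) * k)"
            using det_XC[of n k] 2 unfolding \<rho>_def by simp
          also have "\<dots> = (-1) ^ (n div (k + 1) * C)"
            by (rule sign_eq[of _ _ "int (k+1) * int t * int k - int C + int t * int C"])
               (insert C2e, simp only: of_nat_add of_nat_mult dn q, simp add: ni 2 CC algebra_simps)
          finally show ?thesis using FB True unfolding C_def by simp
        next
          case 3
          have "n = (k+1) * (2 * t + 1) + 0" using nt 3 by (simp add: algebra_simps)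
          hence q: "n div (k+1) = 2 * t + 1" by (simp only: div_aux)
          have "(-1::int) ^ ((n - Suc k) * k) * det (Xm k n) = (-1) ^ ((n - Suc k) * k + k + C2)"
            using det_XD[of n k] 3 unfolding \<rho>_def C2_def by (simp add: power_add)
          also have "\<dots> = (-1) ^ (n div (k + 1) * C)"
            by (rule sign_eq[of _ _ "int (k+1) * int t * int k + int k + int C2 + int t * int C"])
               (insert C2e, simp only: of_nat_add of_nat_mult dn q, simp add: ni 3 CC algebra_simps)
          finally show ?thesis using FB True unfolding C_def by simp
        next
          case 4
          have "n = (k+1) * (2 * t + 1) + 1" using nt 4 by (simp add: algebra_simps)
          hence q: "n div (k+1) = 2 * t + 1" using k1 by (simp only: div_aux)
          have "(-1::int) ^ ((n - Suc k) * k) * det (Xm k n) = (-1) ^ ((n - Suc k) * k + C2)"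
            using det_XE[of n k] 4 unfolding \<rho>_def C2_def by (simp add: power_add)
          also have "\<dots> = (-1) ^ (n div (k + 1) * C)"
            by (rule sign_eq[of _ _ "int (k+1) * int t * int k + int k + int C2 + int t * int C"])
               (insert C2e, simp only: of_nat_add of_nat_mult dn q, simp add: ni 4 CC algebra_simps)
          finally show ?thesis using FB True unfolding C_def by simp
        qed
      qed
    qed
  qed
qed

theorem corollary15:
  fixes n k :: nat
  assumes "n \<ge> 1"
  shows "det (mat n n (\<lambda>(i, j). int (MP (i + j) k))) =
           det (mat n n (\<lambda>(i, j). \<Sum>a\<in>{0..i + j}. \<Sum>l\<in>{- int k..int k + 1}.
                                  trinom (i + j) (int a) (int a + l)))
       \<and> det (mat n n (\<lambda>(i, j). \<Sum>a\<in>{0..i + j}. \<Sum>l\<in>{- int k..int k + 1}.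
                                  trinom (i + j) (int a) (int a + l))) =
           (if n mod (k + 1) = 0 \<or> n mod (k + 1) = 1
            then (-1) ^ (n div (k + 1) * ((k + 1) choose 2))
            else 0)"
proof -
  have e1: "mat n n (\<lambda>(i, j). int (MP (i + j) k)) = mat n n (\<lambda>(i,j). Tm (i + j) (int k))"
    by (simp add: MP_Tm)
  have e2: "mat n n (\<lambda>(i, j). \<Sum>a\<in>{0..i + j}. \<Sum>l\<in>{- int k..int k + 1}. trinom (i + j) (int a) (int a + l))
      = mat n n (\<lambda>(i,j). Tm (i + j) (int k))"
    by (simp add: entry_Tm)
  show ?thesis unfolding e1 e2 hankel_F det_F[OF assms] by simp
qed


end
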